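(* The abelianization of an SB-generated group is finitely generated.
   Context: A subset of a group $G$ is strongly bounded if it has finite diameter in every left-invariant metric on $G$; a group is SB-generated if it is generated by a strongly bounded subset. *)

theory Defs
  imports "HOL-Algebra.Algebra"
begin

definition left_invariant_metric :: "('a, 'b) monoid_scheme \<Rightarrow> ('a \<Rightarrow> 'a \<Rightarrow> real) \<Rightarrow> bool" where
  "left_invariant_metric G d \<longleftrightarrow>
     (\<forall>x\<in>carrier G. \<forall>y\<in>carrier G. 0 \<le> d x y) \<and>
     (\<forall>x\<in>carrier G. \<forall>y\<in>carrier G. d x y = 0 \<longleftrightarrow> x = y) \<and>
     (\<forall>x\<in>carrier G. \<forall>y\<in>carrier G. d x y = d y x) \<and>
     (\<forall>x\<in>carrier G. \<forall>y\<in>carrier G. \<forall>z\<in>carrier G. d x z \<le> d x y + d y z) \<and>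
     (\<forall>g\<in>carrier G. \<forall>x\<in>carrier G. \<forall>y\<in>carrier G. d (g \<otimes>\<^bsub>G\<^esub> x) (g \<otimes>\<^bsub>G\<^esub> y) = d x y)"

definition strongly_bounded :: "('a, 'b) monoid_scheme \<Rightarrow> 'a set \<Rightarrow> bool" where
  "strongly_bounded G A \<longleftrightarrow> A \<subseteq> carrier G \<and>
     (\<forall>d. left_invariant_metric G d \<longrightarrow> (\<exists>C. \<forall>x\<in>A. \<forall>y\<in>A. d x y \<le> C))"

definition SB_generated :: "('a, 'b) monoid_scheme \<Rightarrow> bool" where
  "SB_generated G \<longleftrightarrow> (\<exists>A. strongly_bounded G A \<and> generate G A = carrier G)"

definition finitely_generated_group :: "('a, 'b) monoid_scheme \<Rightarrow> bool" where
  "finitely_generated_group G \<longleftrightarrow>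
     (\<exists>S. finite S \<and> S \<subseteq> carrier G \<and> generate G S = carrier G)"

definition abelianization :: "('a, 'b) monoid_scheme \<Rightarrow> 'a set monoid" where
  "abelianization G = G Mod (derived G (carrier G))"

end

theory Submission
  imports Defs "HOL-Library.Countable_Set"
begin

context group begin

lemma comm_in_D:
  "x \<in> carrier G \<Longrightarrow> y \<in> carrier G \<Longrightarrow> x \<otimes> y \<otimes> inv x \<otimes> inv y \<in> derived G (carrier G)"
  unfolding derived_def by (rule generate.incl) blast

lemma normal_of_D:
  assumes "subgroup S G" "derived G (carrier G) \<subseteq> S" shows "S \<lhd> G"
proof (rule normal_invI[OF assms(1)])
  fix g h assume g: "g \<in> carrier G" and h: "h \<in> S"
  have hc: "h \<in> carrier G" using subgroup.subset[OF assms(1)] h by auto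
  have "g \<otimes> h \<otimes> inv g = (g \<otimes> h \<otimes> inv g \<otimes> inv h) \<otimes> h" using g hc by (simp add: m_assoc)
  moreover have "g \<otimes> h \<otimes> inv g \<otimes> inv h \<in> S" using comm_in_D[OF g hc] assms(2) by auto
  ultimately show "g \<otimes> h \<otimes> inv g \<in> S" using subgroup.m_closed[OF assms(1)] h by metis
qed

lemma rcos_eq_iff:
  assumes "subgroup S G" "x \<in> carrier G" "y \<in> carrier G"
  shows "(S #> x = S #> y) \<longleftrightarrow> x \<otimes> inv y \<in> S"
proof
  assume "S #> x = S #> y"
  hence "x \<in> S #> y" using rcos_self[OF assms(2,1)] by simp
  thus "x \<otimes> inv y \<in> S" using subgroup.rcos_module_imp[OF assms(1) is_group assms(3)] by simp
next
  assume "x \<otimes> inv y \<in> S"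
  hence "x \<in> S #> y" using subgroup.rcos_module_rev[OF assms(1) is_group assms(3,2)] by simp
  thus "S #> x = S #> y" using repr_independence[OF _ assms(3,1)] by simp
qed

lemma comm_Mod_of_D:
  assumes "subgroup S G" "derived G (carrier G) \<subseteq> S" shows "comm_group (G Mod S)"
proof -
  interpret S: normal S G using normal_of_D[OF assms] .
  show ?thesis
  proof (rule group.group_comm_groupI[OF S.factorgroup_is_group])
    fix U V assume "U \<in> carrier (G Mod S)" "V \<in> carrier (G Mod S)"
    then obtain g1 g2 where g: "g1 \<in> carrier G" "g2 \<in> carrier G" "U = S #> g1" "V = S #> g2"
      unfolding FactGroup_def RCOSETS_def by auto
    have "(g1 \<otimes> g2) \<otimes> inv (g2 \<otimes> g1) \<in> S"
      using comm_in_D[OF g(1,2)] assms(2) g by (auto simp add: inv_mult_group m_assoc)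
    hence "S #> (g1 \<otimes> g2) = S #> (g2 \<otimes> g1)"
      using rcos_eq_iff[OF assms(1)] g by simp
    thus "U \<otimes>\<^bsub>G Mod S\<^esub> V = V \<otimes>\<^bsub>G Mod S\<^esub> U" using g by (simp add: FactGroup_def S.rcos_sum)
  qed
qed

lemma hom_Mod_of_D:
  assumes "subgroup S G" "derived G (carrier G) \<subseteq> S" shows "group_hom G (G Mod S) (\<lambda>x. S #> x)"
proof -
  interpret S: normal S G using normal_of_D[OF assms] .
  show ?thesis unfolding group_hom_def group_hom_axioms_def
    using S.r_coset_hom_Mod S.factorgroup_is_group is_group by simp
qed

lemma one_Mod_iff:
  assumes "subgroup S G" "x \<in> carrier G"
  shows "(S #> x = \<one>\<^bsub>G Mod S\<^esub>) \<longleftrightarrow> x \<in> S"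
proof -
  have "S #> \<one> = S" using coset_join2[OF one_closed assms(1)] subgroup.one_closed[OF assms(1)] by simp
  hence "(S #> x = S) \<longleftrightarrow> (S #> x = S #> \<one>)" by simp
  also have "\<dots> \<longleftrightarrow> x \<in> S" using rcos_eq_iff[OF assms(1) assms(2) one_closed] assms by simp
  finally show ?thesis by (simp add: FactGroup_def)
qed

lemma gen_fin:
  assumes "x \<in> generate G Y"
  shows "\<exists>X0. finite X0 \<and> X0 \<subseteq> Y \<and> x \<in> generate G X0"
  using assms
proof (induction rule: generate.induct)
  case one
  have "finite {} \<and> {} \<subseteq> Y \<and> \<one> \<in> generate G {}" by (simp add: generate.one)
  then show ?case by (rule exI)
next
  case (incl h)
  have "finite {h} \<and> {h} \<subseteq> Y \<and> h \<in> generate G {h}" using incl by (simp add: generate.incl)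
  then show ?case by (rule exI)
next
  case (inv h)
  have "finite {h} \<and> {h} \<subseteq> Y \<and> inv h \<in> generate G {h}" using inv by (simp add: generate.inv)
  then show ?case by (rule exI)
next
  case (eng h1 h2)
  obtain X1 where f1: "finite X1 \<and> X1 \<subseteq> Y \<and> h1 \<in> generate G X1" using eng.IH(1) by (rule exE)
  obtain X2 where f2: "finite X2 \<and> X2 \<subseteq> Y \<and> h2 \<in> generate G X2" using eng.IH(2) by (rule exE)
  have a: "h1 \<in> generate G (X1 \<union> X2)" using mono_generate[of X1 "X1 \<union> X2"] f1 by auto
  have b: "h2 \<in> generate G (X1 \<union> X2)" using mono_generate[of X2 "X1 \<union> X2"] f2 by auto
  have "h1 \<otimes> h2 \<in> generate G (X1 \<union> X2)" by (rule generate.eng[OF a b])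
  then have "finite (X1 \<union> X2) \<and> X1 \<union> X2 \<subseteq> Y \<and> h1 \<otimes> h2 \<in> generate G (X1 \<union> X2)"
    using f1 f2 by simp
  then show ?case by (rule exI)
qed

lemma gen_gen_un:
  assumes "A \<subseteq> carrier G" "B \<subseteq> carrier G"
  shows "generate G (generate G A \<union> B) = generate G (A \<union> B)"
proof
  have AB: "A \<union> B \<subseteq> carrier G" using assms by auto
  have "generate G A \<subseteq> generate G (A \<union> B)" by (rule mono_generate) auto
  moreover have "B \<subseteq> generate G (A \<union> B)"
  proof
    fix y assume "y \<in> B" then show "y \<in> generate G (A \<union> B)" by (intro generate.incl) simp
  qed
  ultimately have "generate G A \<union> B \<subseteq> generate G (A \<union> B)" by (rule Un_least)
  then show "generate G (generate G A \<union> B) \<subseteq> generate G (A \<union> B)"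
    by (rule generate_subgroup_incl[OF _ generate_is_subgroup[OF AB]])
next
  have "A \<subseteq> generate G A"
  proof
    fix y assume "y \<in> A" then show "y \<in> generate G A" by (rule generate.incl)
  qed
  then have "A \<union> B \<subseteq> generate G A \<union> B" by auto
  then show "generate G (A \<union> B) \<subseteq> generate G (generate G A \<union> B)"
    by (rule mono_generate)
qed

lemma gen_insert_normal:
  assumes "S \<lhd> G" "x \<in> carrier G" "y \<in> generate G (S \<union> {x})"
  shows "\<exists>k::int. \<exists>s\<in>S. y = x [^] k \<otimes> s"
  using assms(3)
proof (induction rule: generate.induct)
  interpret S: normal S G by fact
  case one then show ?case using assms(2) by (intro exI[of _ 0] bexI[of _ \<one>]) auto
next
  interpret S: normal S G by fact
  case (incl h) then show ?case
  proof
    assume "h \<in> S" then show ?case using S.subset by (intro exI[of _ 0] bexI[of _ h]) auto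
  next
    assume "h \<in> {x}" then show ?case using assms(2) by (intro exI[of _ 1] bexI[of _ \<one>]) auto
  qed
next
  interpret S: normal S G by fact
  case (inv h) then show ?case
  proof
    assume "h \<in> S" then show ?case using S.subset by (intro exI[of _ 0] bexI[of _ "inv h"]) auto
  next
    assume "h \<in> {x}" then show ?case using assms(2)
      by (intro exI[of _ "-1"] bexI[of _ \<one>]) (auto simp: int_pow_neg)
  qed
next
  interpret S: normal S G by fact
  case (eng h1 h2)
  then obtain i j :: int and s t where st: "s \<in> S" "t \<in> S" "h1 = x [^] i \<otimes> s" "h2 = x [^] j \<otimes> t" by blast
  have c: "s \<in> carrier G" "t \<in> carrier G" "x [^] i \<in> carrier G" "x [^] j \<in> carrier G"
    using st S.subset assms(2) by auto
  have e1: "h1 \<otimes> h2 = x [^] (i + j) \<otimes> ((inv (x [^] j) \<otimes> s \<otimes> x [^] j) \<otimes> t)"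
    using c st(3,4) assms(2) by (simp add: int_pow_mult m_assoc[symmetric]) (simp add: m_assoc)
  have e2: "(inv (x [^] j) \<otimes> s \<otimes> x [^] j) \<otimes> t \<in> S"
    by (rule S.m_closed[OF S.inv_op_closed1[OF c(4) st(1)] st(2)])
  show ?case by (rule exI[of _ "i+j"], rule bexI[where x="inv (x [^] j) \<otimes> s \<otimes> x [^] j \<otimes> t"], rule e1, rule e2)
qed

end

context group begin

lemma chain_bound:
  assumes sg: "\<And>n. subgroup (W n) G" and mono: "\<And>n. W n \<subseteq> W (Suc n)"
    and cov: "\<And>x. x \<in> carrier G \<Longrightarrow> \<exists>n. x \<in> W n" and sb: "strongly_bounded G A"
  shows "\<exists>n. A \<subseteq> W n"
proof -
  have monoW: "W m \<subseteq> W n" if "m \<le> n" for m n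
    using lift_Suc_mono_le[of W, OF mono that] .
  define lv where "lv x = (LEAST n. x \<in> W n)" for x
  have lv_in: "x \<in> W (lv x)" if "x \<in> carrier G" for x
    unfolding lv_def using cov[OF that] by (rule LeastI_ex)
  have lv_le: "lv x \<le> n" if "x \<in> W n" for x n
    unfolding lv_def using that by (rule Least_le)
  have W_inv: "inv x \<in> W n \<longleftrightarrow> x \<in> W n" if "x \<in> carrier G" for x n
    using subgroup.m_inv_closed[OF sg, of "inv x" n] subgroup.m_inv_closed[OF sg, of x n] that by auto
  have lv_inv: "lv (inv x) = lv x" if "x \<in> carrier G" for x
    using lv_le lv_in W_inv that by (meson antisym inv_closed)
  have lv_mult: "lv (x \<otimes> y) \<le> max (lv x) (lv y)" if "x \<in> carrier G" "y \<in> carrier G" for x y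
  proof -
    have "x \<in> W (max (lv x) (lv y))" using lv_in[OF that(1)] monoW[of "lv x" "max (lv x) (lv y)"] by auto
    moreover have "y \<in> W (max (lv x) (lv y))" using lv_in[OF that(2)] monoW[of "lv y" "max (lv x) (lv y)"] by auto
    ultimately have "x \<otimes> y \<in> W (max (lv x) (lv y))" using subgroup.m_closed[OF sg] by blast
    then show ?thesis by (rule lv_le)
  qed
  define d where "d x y = (if x = y then 0 else real (lv (inv x \<otimes> y)) + 1)" for x y
  have "left_invariant_metric G d"
    unfolding left_invariant_metric_def
  proof (intro conjI ballI)
    fix x y assume x: "x \<in> carrier G" and y: "y \<in> carrier G"
    show "0 \<le> d x y" unfolding d_def by simp
    show "(d x y = 0) = (x = y)" unfolding d_def by simp
    have "inv (inv x \<otimes> y) = inv y \<otimes> x" using x y by (simp add: inv_mult_group)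
    then show "d x y = d y x" unfolding d_def using lv_inv[of "inv x \<otimes> y"] x y by auto
  next
    fix x y z assume x: "x \<in> carrier G" and y: "y \<in> carrier G" and z: "z \<in> carrier G"
    show "d x z \<le> d x y + d y z"
    proof (cases "x = y \<or> y = z")
      case True then show ?thesis unfolding d_def by auto
    next
      case False
      have "inv x \<otimes> z = (inv x \<otimes> y) \<otimes> (inv y \<otimes> z)" using x y z by (simp add: m_assoc[symmetric]) (simp add: m_assoc)
      then have "lv (inv x \<otimes> z) \<le> max (lv (inv x \<otimes> y)) (lv (inv y \<otimes> z))"
        using lv_mult[of "inv x \<otimes> y" "inv y \<otimes> z"] x y z by simp
      then have "real (lv (inv x \<otimes> z)) \<le> real (lv (inv x \<otimes> y)) + real (lv (inv y \<otimes> z))"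
        by linarith
      then show ?thesis using False unfolding d_def by auto
    qed
  next
    fix g x y assume g: "g \<in> carrier G" and x: "x \<in> carrier G" and y: "y \<in> carrier G"
    have "inv (g \<otimes> x) \<otimes> (g \<otimes> y) = inv x \<otimes> y" using g x y
      by (simp add: inv_mult_group m_assoc) (simp add: m_assoc[symmetric])
    moreover have "(g \<otimes> x = g \<otimes> y) = (x = y)" using g x y by simp
    ultimately show "d (g \<otimes> x) (g \<otimes> y) = d x y" unfolding d_def by simp
  qed
  then obtain C where C: "\<forall>x\<in>A. \<forall>y\<in>A. d x y \<le> C" using sb unfolding strongly_bounded_def by blast
  have Asub: "A \<subseteq> carrier G" using sb unfolding strongly_bounded_def by blast
  show ?thesis
  proof (cases "A = {}")
    case True then show ?thesis by auto
  next
    case False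
    then obtain a0 where a0: "a0 \<in> A" by blast
    have a0c: "a0 \<in> carrier G" using a0 Asub by auto
    define K where "K = max (lv a0) (nat \<lceil>C\<rceil>)"
    have "a \<in> W K" if a: "a \<in> A" for a
    proof -
      have ac: "a \<in> carrier G" using a Asub by auto
      have "inv a0 \<otimes> a \<in> W (nat \<lceil>C\<rceil>)"
      proof (cases "a0 = a")
        case True
        then show ?thesis using subgroup.one_closed[OF sg] a0c by simp
      next
        case False
        then have "real (lv (inv a0 \<otimes> a)) + 1 \<le> C" using C a0 a unfolding d_def by fastforce
        then have "lv (inv a0 \<otimes> a) \<le> nat \<lceil>C\<rceil>" by linarith
        then show ?thesis using lv_in[of "inv a0 \<otimes> a"] monoW a0c ac by blast
      qed
      then have "inv a0 \<otimes> a \<in> W K" using monoW[of "nat \<lceil>C\<rceil>" K] unfolding K_def by auto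
      moreover have "a0 \<in> W K" using lv_in[OF a0c] monoW[of "lv a0" K] unfolding K_def by auto
      ultimately have "a0 \<otimes> (inv a0 \<otimes> a) \<in> W K" using subgroup.m_closed[OF sg] by blast
      then show ?thesis using a0c ac by (simp add: m_assoc[symmetric])
    qed
    then show ?thesis by blast
  qed
qed

lemma fg_ab:
  assumes "finite F" "F \<subseteq> carrier G" "generate G (derived G (carrier G) \<union> F) = carrier G"
  shows "finitely_generated_group (abelianization G)"
proof -
  let ?D = "derived G (carrier G)"
  let ?h = "\<lambda>x. ?D #> x"
  have Dsg: "subgroup ?D G" by (rule derived_is_subgroup) simp
  interpret h: group_hom G "G Mod ?D" ?h using hom_Mod_of_D[OF Dsg] by simp
  have Dc: "?D \<subseteq> carrier G" using subgroup.subset[OF Dsg] .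
  have surj: "?h ` carrier G = carrier (G Mod ?D)" unfolding FactGroup_def RCOSETS_def by auto
  have Fc: "?h ` F \<subseteq> carrier (G Mod ?D)" using assms(2) by auto
  have "generate (G Mod ?D) (?h ` (?D \<union> F)) = carrier (G Mod ?D)"
    using h.generate_img[of "?D \<union> F"] assms(2,3) Dc surj by auto
  moreover have "generate (G Mod ?D) (?h ` (?D \<union> F)) \<subseteq> generate (G Mod ?D) (?h ` F)"
  proof (rule h.H.generate_subgroup_incl[OF _ h.H.generate_is_subgroup[OF Fc]])
    have "?h ` ?D \<subseteq> {\<one>\<^bsub>G Mod ?D\<^esub>}" using one_Mod_iff[OF Dsg] Dc by auto
    moreover have "\<one>\<^bsub>G Mod ?D\<^esub> \<in> generate (G Mod ?D) (?h ` F)" by (rule generate.one)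
    moreover have "?h ` F \<subseteq> generate (G Mod ?D) (?h ` F)"
    proof
      fix y assume "y \<in> ?h ` F" then show "y \<in> generate (G Mod ?D) (?h ` F)" by (rule generate.incl)
    qed
    ultimately show "?h ` (?D \<union> F) \<subseteq> generate (G Mod ?D) (?h ` F)" by auto
  qed
  moreover have "generate (G Mod ?D) (?h ` F) \<subseteq> carrier (G Mod ?D)"
    by (rule h.H.generate_incl[OF Fc])
  ultimately have "generate (G Mod ?D) (?h ` F) = carrier (G Mod ?D)" by auto
  then show ?thesis unfolding finitely_generated_group_def abelianization_def
    using assms(1) Fc by blast
qed

end

lemma (in comm_group) fin_gen_exp:
  fixes M :: nat
  assumes "finite F" "F \<subseteq> carrier G" "M > 0" "\<forall>f\<in>F. f [^] M = \<one>"
  shows "finite (generate G F)"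
  using assms(1,2,4)
proof (induction F rule: finite_induct)
  case empty then show ?case by (simp add: generate_empty)
next
  case (insert f F)
  have fc: "f \<in> carrier G" and Fc: "F \<subseteq> carrier G" using insert.prems by auto
  have fM: "f [^] M = \<one>" using insert.prems by auto
  let ?S = "generate G F"
  have Ssg: "subgroup ?S G" by (rule generate_is_subgroup[OF Fc])
  have Sn: "?S \<lhd> G" using Ssg normal_iff_subgroup by blast
  have eq: "generate G (insert f F) = generate G (?S \<union> {f})"
    using gen_gen_un[OF Fc, of "{f}"] fc by (simp add: insert_commute)
  have "generate G (insert f F) \<subseteq> (\<lambda>(k, y). f [^] k \<otimes> y) ` ({..<M} \<times> ?S)"
  proof
    fix z assume "z \<in> generate G (insert f F)"
    then have "z \<in> generate G (?S \<union> {f})" using eq by simp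
    then obtain k :: int and s where s: "s \<in> ?S" "z = f [^] k \<otimes> s"
      using gen_insert_normal[OF Sn fc] by blast
    define r where "r = k mod int M"
    have r0: "0 \<le> r" "r < int M" unfolding r_def using assms(3) by auto
    have "f [^] k = f [^] (int M * (k div int M) + r)" unfolding r_def by simp
    also have "\<dots> = (f [^] int M) [^] (k div int M) \<otimes> f [^] r"
      using fc by (simp add: int_pow_mult int_pow_pow)
    also have "\<dots> = f [^] r" using fc fM by (simp add: int_pow_int)
    also have "\<dots> = f [^] (nat r)" using r0 int_pow_int[of G f "nat r"] by simp
    finally have "z = f [^] (nat r) \<otimes> s" using s by simp
    moreover have "nat r < M" using r0 by linarith
    ultimately show "z \<in> (\<lambda>(k, y). f [^] k \<otimes> y) ` ({..<M} \<times> ?S)"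
      using s(1) by (intro image_eqI[of _ _ "(nat r, s)"]) auto
  qed
  moreover have "finite ({..<M} \<times> ?S)" using insert.IH insert.prems by auto
  ultimately show ?case by (meson finite_imageI finite_subset)
qed

primrec Fseq :: "('a set \<Rightarrow> 'a) \<Rightarrow> nat \<Rightarrow> 'a set" where
  "Fseq c 0 = {}"
| "Fseq c (Suc n) = insert (c (Fseq c n)) (Fseq c n)"

locale maxN = group G for G (structure) +
  fixes b :: "nat \<Rightarrow> 'a" and Fs :: "nat \<Rightarrow> 'a set" and N :: "'a set"
  assumes Fs_fin: "finite (Fs n)" and Fs_sub: "Fs n \<subseteq> carrier G" and Fs0: "Fs 0 = {}"
    and Fs_Suc: "Fs (Suc n) = insert (b n) (Fs n)" and b_in: "b n \<in> carrier G"
    and N_sg: "subgroup N G" and N_D: "derived G (carrier G) \<subseteq> N"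
    and P: "b n \<notin> generate G (N \<union> Fs n)"
    and maxi: "\<And>N'. subgroup N' G \<Longrightarrow> N \<subseteq> N' \<Longrightarrow> (\<forall>n. b n \<notin> generate G (N' \<union> Fs n)) \<Longrightarrow> N' = N"
begin

definition L :: "nat \<Rightarrow> 'a set" where "L n = generate G (N \<union> Fs n)"

lemma Nc: "N \<subseteq> carrier G" using subgroup.subset[OF N_sg] .

lemma L_sg: "subgroup (L n) G"
  unfolding L_def using Nc Fs_sub by (intro generate_is_subgroup) auto

lemma L_c: "L n \<subseteq> carrier G" using subgroup.subset[OF L_sg] .

lemma N_L: "N \<subseteq> L n"
proof
  fix x assume "x \<in> N" then show "x \<in> L n" unfolding L_def by (intro generate.incl) simp
qed

lemma L_D: "derived G (carrier G) \<subseteq> L n" using N_D N_L by blast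

lemma L_normal: "L n \<lhd> G" using normal_of_D[OF L_sg L_D] .

lemma Fs_mono: "m \<le> n \<Longrightarrow> Fs m \<subseteq> Fs n"
  using lift_Suc_mono_le[of Fs] Fs_Suc by blast

lemma L_mono: "m \<le> n \<Longrightarrow> L m \<subseteq> L n"
  unfolding L_def using Fs_mono by (intro mono_generate) blast

lemma b_L: "b n \<in> L (Suc n)"
  unfolding L_def Fs_Suc by (intro generate.incl) simp

lemma L_Suc: "L (Suc n) = generate G (L n \<union> {b n})"
proof -
  have "N \<union> Fs (Suc n) = (N \<union> Fs n) \<union> {b n}" unfolding Fs_Suc by auto
  then show ?thesis unfolding L_def
    using gen_gen_un[of "N \<union> Fs n" "{b n}"] Nc Fs_sub b_in by simp
qed

lemma L0: "L 0 = N"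
proof
  show "L 0 \<subseteq> N" unfolding L_def Fs0 using generate_subgroup_incl[OF _ N_sg] by simp
  show "N \<subseteq> L 0" by (rule N_L)
qed

lemma key:
  assumes x: "x \<in> carrier G" "x \<notin> N"
  shows "\<exists>k::int. \<exists>n. x [^] k \<in> L n \<and> x [^] k \<notin> N"
proof -
  let ?N' = "generate G (N \<union> {x})"
  have sg: "subgroup ?N' G" using Nc x by (intro generate_is_subgroup) auto
  have sub: "N \<subseteq> ?N'"
  proof
    fix y assume "y \<in> N" then show "y \<in> ?N'" by (intro generate.incl) simp
  qed
  have "x \<in> ?N'" by (intro generate.incl) simp
  then have ne: "?N' \<noteq> N" using x by blast
  then obtain n where bn: "b n \<in> generate G (?N' \<union> Fs n)" using maxi[OF sg sub] by blast
  have "generate G (?N' \<union> Fs n) = generate G ((N \<union> {x}) \<union> Fs n)"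
    using gen_gen_un[of "N \<union> {x}" "Fs n"] Nc x Fs_sub by simp
  also have "(N \<union> {x}) \<union> Fs n = (N \<union> Fs n) \<union> {x}" by auto
  also have "generate G ((N \<union> Fs n) \<union> {x}) = generate G (L n \<union> {x})"
    unfolding L_def using gen_gen_un[of "N \<union> Fs n" "{x}"] Nc x Fs_sub by simp
  finally have "b n \<in> generate G (L n \<union> {x})" using bn by simp
  then obtain k :: int and s where s: "s \<in> L n" "b n = x [^] k \<otimes> s"
    using gen_insert_normal[OF L_normal x(1)] by blast
  have sc: "s \<in> carrier G" using s L_c by auto
  have xk: "x [^] k = b n \<otimes> inv s" using s sc x b_in by (simp add: m_assoc)
  have "s \<in> L (Suc n)" using s L_mono[of n "Suc n"] by auto
  then have "b n \<otimes> inv s \<in> L (Suc n)"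
    using b_L subgroup.m_closed[OF L_sg] subgroup.m_inv_closed[OF L_sg] by blast
  then have in1: "x [^] k \<in> L (Suc n)" using xk by simp
  have in2: "x [^] k \<notin> N"
  proof
    assume "x [^] k \<in> N"
    then have "x [^] k \<in> L n" using N_L by auto
    then have "b n \<in> L n" using s subgroup.m_closed[OF L_sg] by simp
    then show False using P unfolding L_def by blast
  qed
  show ?thesis using in1 in2 by blast
qed

lemma key_nat:
  assumes x: "x \<in> carrier G" "x \<notin> N"
  shows "\<exists>m::nat. m > 0 \<and> (\<exists>n. x [^] m \<in> L n)"
proof -
  obtain k :: int and n where k: "x [^] k \<in> L n" "x [^] k \<notin> N" using key[OF x] by blast
  have "k \<noteq> 0" using k(2) subgroup.one_closed[OF N_sg] by auto
  show ?thesis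
  proof (cases "k \<ge> 0")
    case True
    then have "x [^] (nat k) = x [^] k" using int_pow_int[of G x "nat k"] by simp
    then show ?thesis using k \<open>k \<noteq> 0\<close> True by (intro exI[of _ "nat k"]) auto
  next
    case False
    have "x [^] (nat (-k)) = x [^] (-k)" using False int_pow_int[of G x "nat (-k)"] by simp
    also have "\<dots> = inv (x [^] k)" using x by (simp add: int_pow_neg)
    finally have "x [^] (nat (-k)) \<in> L n" using k(1) subgroup.m_inv_closed[OF L_sg] by simp
    then show ?thesis using False by (intro exI[of _ "nat (-k)"]) auto
  qed
qed

abbreviation q :: "'a \<Rightarrow> 'a set" where "q x \<equiv> N #> x"

lemma Qc: "comm_group (G Mod N)" by (rule comm_Mod_of_D[OF N_sg N_D])
lemma qh: "group_hom G (G Mod N) q" by (rule hom_Mod_of_D[OF N_sg N_D])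

lemma q1: "x \<in> carrier G \<Longrightarrow> (q x = \<one>\<^bsub>G Mod N\<^esub>) \<longleftrightarrow> x \<in> N"
  by (rule one_Mod_iff[OF N_sg])

lemma q_surj: "q ` carrier G = carrier (G Mod N)"
  unfolding FactGroup_def RCOSETS_def by auto

lemma cnt_L: "countable (q ` L n)"
proof (induction n)
  case 0
  have "q x = \<one>\<^bsub>G Mod N\<^esub>" if "x \<in> L 0" for x
    using that q1 Nc unfolding L0 by blast
  then have "q ` L 0 \<subseteq> {\<one>\<^bsub>G Mod N\<^esub>}" by blast
  then show ?case by (rule countable_subset) simp
next
  case (Suc n)
  interpret h: group_hom G "G Mod N" q by (rule qh)
  have "q ` L (Suc n) \<subseteq> (\<lambda>(k::int, y). q (b n) [^]\<^bsub>G Mod N\<^esub> k \<otimes>\<^bsub>G Mod N\<^esub> y) ` (UNIV \<times> q ` L n)"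
  proof
    fix z assume "z \<in> q ` L (Suc n)"
    then obtain w where w: "w \<in> L (Suc n)" "z = q w" by blast
    then obtain k :: int and s where s: "s \<in> L n" "w = b n [^] k \<otimes> s"
      using gen_insert_normal[OF L_normal b_in] L_Suc by blast
    have sc: "s \<in> carrier G" using s L_c by auto
    have "z = q (b n) [^]\<^bsub>G Mod N\<^esub> k \<otimes>\<^bsub>G Mod N\<^esub> q s"
      using w s sc b_in by (simp add: h.hom_int_pow)
    then show "z \<in> (\<lambda>(k::int, y). q (b n) [^]\<^bsub>G Mod N\<^esub> k \<otimes>\<^bsub>G Mod N\<^esub> y) ` (UNIV \<times> q ` L n)"
      using s by (intro image_eqI[of _ _ "(k, q s)"]) auto
  qed
  moreover have "countable (UNIV \<times> q ` L n :: (int \<times> 'a set) set)" using Suc.IH by simp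
  ultimately show ?case by (meson countable_image countable_subset)
qed

definition Lall where "Lall = (\<Union>n. L n)"

lemma Lall_c: "Lall \<subseteq> carrier G" unfolding Lall_def using L_c by blast

lemma cnt_Lall: "countable (q ` Lall)"
  unfolding Lall_def image_UN using cnt_L by blast

lemma prime_in:
  fixes p :: nat
  assumes x: "x \<in> carrier G" and p: "Factorial_Ring.prime p" and xp: "x [^] p \<in> N"
  shows "x \<in> Lall"
proof (cases "x \<in> N")
  case True then show ?thesis unfolding Lall_def using N_L by blast
next
  case False
  obtain k :: int and n where k: "x [^] k \<in> L n" "x [^] k \<notin> N" using key[OF x False] by blast
  have xp': "x [^] (int p) \<in> N" using xp int_pow_int[of G x p] by simp
  have ndvd: "\<not> int p dvd k"
  proof
    assume "int p dvd k"
    then obtain t where "k = int p * t" by (elim dvdE)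
    then have "x [^] k = (x [^] (int p)) [^] t" using x by (simp add: int_pow_pow)
    then have "x [^] k \<in> N" using subgroup_int_pow_closed[OF N_sg xp'] by simp
    then show False using k(2) by simp
  qed
  have "Factorial_Ring.prime (int p)" using p by simp
  then have "coprime (int p) k" using ndvd by (rule prime_imp_coprime)
  then have g1: "gcd (int p) k = 1" by simp
  obtain u v where uv: "u * int p + v * k = gcd (int p) k" using bezout_int by blast
  have "x = x [^] (u * int p + v * k)" using uv g1 x by simp
  also have "\<dots> = (x [^] (int p)) [^] u \<otimes> (x [^] k) [^] v"
    using x by (simp add: int_pow_mult int_pow_pow mult.commute)
  finally have xe: "x = (x [^] (int p)) [^] u \<otimes> (x [^] k) [^] v" .
  have "(x [^] (int p)) [^] u \<in> L n" using subgroup_int_pow_closed[OF N_sg xp'] N_L by blast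
  moreover have "(x [^] k) [^] v \<in> L n" using subgroup_int_pow_closed[OF L_sg k(1)] .
  ultimately have "x \<in> L n" using xe subgroup.m_closed[OF L_sg] by metis
  then show ?thesis unfolding Lall_def by blast
qed

definition T :: "nat \<Rightarrow> 'a set" where "T m = {x \<in> carrier G. x [^] m \<in> N}"

lemma fibre:
  assumes Y: "Y \<subseteq> carrier G" "countable (q ` Y)" and Tm: "countable (q ` T m)"
  shows "countable (q ` {x \<in> carrier G. x [^] m \<in> Y})"
proof -
  interpret h: group_hom G "G Mod N" q by (rule qh)
  interpret Q: comm_group "G Mod N" by (rule Qc)
  define r where "r y = (SOME x. x \<in> carrier G \<and> x [^] m \<in> Y \<and> q (x [^] m) = y)" for y
  have "q ` {x \<in> carrier G. x [^] m \<in> Y} \<subseteq> (\<Union>y\<in>q ` Y. (\<lambda>t. t \<otimes>\<^bsub>G Mod N\<^esub> q (r y)) ` (q ` T m))"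
  proof
    fix z assume "z \<in> q ` {x \<in> carrier G. x [^] m \<in> Y}"
    then obtain x where x: "x \<in> carrier G" "x [^] m \<in> Y" "z = q x" by blast
    define y where "y = q (x [^] m)"
    have "\<exists>x'. x' \<in> carrier G \<and> x' [^] m \<in> Y \<and> q (x' [^] m) = y" using x y_def by blast
    then have ry: "r y \<in> carrier G" "r y [^] m \<in> Y" "q (r y [^] m) = y"
      unfolding r_def by (metis (mono_tags, lifting) someI_ex)+
    define t where "t = x \<otimes> inv (r y)"
    have tc: "t \<in> carrier G" unfolding t_def using x ry by simp
    have "q (t [^] m) = (q x \<otimes>\<^bsub>G Mod N\<^esub> inv\<^bsub>G Mod N\<^esub> q (r y)) [^]\<^bsub>G Mod N\<^esub> m"
      unfolding t_def using x ry by (simp add: h.hom_nat_pow h.hom_inv)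
    also have "\<dots> = q x [^]\<^bsub>G Mod N\<^esub> m \<otimes>\<^bsub>G Mod N\<^esub> inv\<^bsub>G Mod N\<^esub> (q (r y) [^]\<^bsub>G Mod N\<^esub> m)"
    proof -
      have a1: "q x \<in> carrier (G Mod N)" "q (r y) \<in> carrier (G Mod N)" using x ry by auto
      have a2: "inv\<^bsub>G Mod N\<^esub> q (r y) \<in> carrier (G Mod N)" using a1 by simp
      show ?thesis using Q.nat_pow_distrib[OF a1(1) a2, of m] h.H.nat_pow_inv[OF a1(2), of m]
        by (simp only:)
    qed
    also have "\<dots> = y \<otimes>\<^bsub>G Mod N\<^esub> inv\<^bsub>G Mod N\<^esub> y"
      using x ry y_def by (simp only: h.hom_nat_pow[symmetric])
    also have "\<dots> = \<one>\<^bsub>G Mod N\<^esub>"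
    proof -
      have "y \<in> carrier (G Mod N)" using x y_def by simp
      then show ?thesis by (rule h.H.r_inv)
    qed
    finally have "t [^] m \<in> N" using q1 tc by simp
    then have tT: "t \<in> T m" unfolding T_def using tc by simp
    have tx: "t \<otimes> r y = x" unfolding t_def using x ry by (simp add: m_assoc)
    have zeq: "z = q t \<otimes>\<^bsub>G Mod N\<^esub> q (r y)" using h.hom_mult[OF tc ry(1)] tx x(3) by simp
    have yin: "y \<in> q ` Y" using x(2) unfolding y_def by (rule imageI)
    have "q t \<in> q ` T m" using tT by (rule imageI)
    then have "z \<in> (\<lambda>t. t \<otimes>\<^bsub>G Mod N\<^esub> q (r y)) ` (q ` T m)"
      by (rule image_eqI[rotated]) (rule zeq)
    then show "z \<in> (\<Union>y\<in>q ` Y. (\<lambda>t. t \<otimes>\<^bsub>G Mod N\<^esub> q (r y)) ` (q ` T m))"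
      by (rule UN_I[OF yin])
  qed
  moreover have "countable (\<Union>y\<in>q ` Y. (\<lambda>t. t \<otimes>\<^bsub>G Mod N\<^esub> q (r y)) ` (q ` T m))"
    by (rule countable_UN[OF Y(2)], rule countable_image[OF Tm])
  ultimately show ?thesis by (rule countable_subset)
qed

lemma T_cnt: "m > 0 \<Longrightarrow> countable (q ` T m)"
proof (induction m rule: less_induct)
  case (less m)
  show ?case
  proof (cases "m = 1")
    case True
    have "q x = \<one>\<^bsub>G Mod N\<^esub>" if "x \<in> T m" for x
    proof -
      have "x \<in> carrier G" "x [^] m \<in> N" using that unfolding T_def by auto
      then show ?thesis using q1 True by simp
    qed
    then have "q ` T m \<subseteq> {\<one>\<^bsub>G Mod N\<^esub>}" by blast
    then show ?thesis by (rule countable_subset) simp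
  next
    case False
    obtain p where p: "Factorial_Ring.prime p" "p dvd m" using prime_factor_nat[OF False] by blast
    then obtain m' where m': "m = p * m'" by (elim dvdE)
    have p1: "p > 1" using p(1) prime_gt_1_nat by blast
    have m'0: "m' > 0" using m' less.prems by (cases "m' = 0") auto
    have "1 * m' < p * m'" using p1 m'0 by (intro mult_strict_right_mono) auto
    then have m'lt: "m' < m" using m' by simp
    have IH: "countable (q ` T m')" using less.IH[OF m'lt m'0] .
    have sub: "T m \<subseteq> {x \<in> carrier G. x [^] p \<in> T m'}"
    proof
      fix x assume "x \<in> T m"
      then have x: "x \<in> carrier G" "x [^] m \<in> N" unfolding T_def by auto
      have "(x [^] p) [^] m' = x [^] m" using x(1) m' by (simp add: nat_pow_pow)
      then show "x \<in> {x \<in> carrier G. x [^] p \<in> T m'}" unfolding T_def using x by simp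
    qed
    have Tp: "T p \<subseteq> Lall"
    proof
      fix x assume "x \<in> T p"
      then have x: "x \<in> carrier G" "x [^] p \<in> N" unfolding T_def by auto
      show "x \<in> Lall" by (rule prime_in[OF x(1) p(1) x(2)])
    qed
    have Tpc: "countable (q ` T p)" by (rule countable_subset[OF image_mono[OF Tp] cnt_Lall])
    have Tm'c: "T m' \<subseteq> carrier G" unfolding T_def by auto
    have "countable (q ` {x \<in> carrier G. x [^] p \<in> T m'})" by (rule fibre[OF Tm'c IH Tpc])
    then show ?thesis by (rule countable_subset[OF image_mono[OF sub]])
  qed
qed

lemma all_cnt: "countable (carrier (G Mod N))"
proof -
  let ?U = "\<Union>m\<in>{(0::nat)<..}. {x \<in> carrier G. x [^] m \<in> Lall}"
  have cov: "carrier G \<subseteq> ?U"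
  proof
    fix x assume x: "x \<in> carrier G"
    show "x \<in> ?U"
    proof (cases "x \<in> N")
      case True
      have "x [^] (1::nat) \<in> Lall" using x True N_L unfolding Lall_def by auto
      then have "x \<in> {x \<in> carrier G. x [^] (1::nat) \<in> Lall}" using x by simp
      then show ?thesis by (rule UN_I[rotated]) simp
    next
      case False
      then obtain m :: nat and n where mn: "m > 0" "x [^] m \<in> L n" using key_nat[OF x False] by blast
      then have "x [^] m \<in> Lall" unfolding Lall_def by (rule_tac UN_I) auto
      then have "x \<in> {x \<in> carrier G. x [^] m \<in> Lall}" using x by simp
      then show ?thesis by (rule UN_I[rotated]) (simp add: mn(1))
    qed
  qed
  have "q ` carrier G \<subseteq> q ` ?U" by (rule image_mono[OF cov])
  also have "\<dots> = (\<Union>m\<in>{(0::nat)<..}. q ` {x \<in> carrier G. x [^] m \<in> Lall})" by (rule image_UN)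
  finally have sub: "q ` carrier G \<subseteq> (\<Union>m\<in>{(0::nat)<..}. q ` {x \<in> carrier G. x [^] m \<in> Lall})" .
  have "countable (\<Union>m\<in>{(0::nat)<..}. q ` {x \<in> carrier G. x [^] m \<in> Lall})"
  proof (rule countable_UN)
    show "countable {(0::nat)<..}" by (rule countableI_type)
  next
    fix m :: nat assume "m \<in> {0<..}"
    then have "m > 0" by simp
    then show "countable (q ` {x \<in> carrier G. x [^] m \<in> Lall})"
      by (rule fibre[OF Lall_c cnt_Lall T_cnt])
  qed
  then have "countable (q ` carrier G)" by (rule countable_subset[OF sub])
  then show ?thesis unfolding q_surj .
qed

end

lemma (in group) img_gen:
  assumes "subgroup S G" "derived G (carrier G) \<subseteq> S" "F \<subseteq> carrier G"
  shows "(\<lambda>x. S #> x) ` generate G (S \<union> F) \<subseteq> generate (G Mod S) ((\<lambda>x. S #> x) ` F)"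
proof -
  let ?h = "\<lambda>x. S #> x"
  interpret h: group_hom G "G Mod S" ?h using hom_Mod_of_D[OF assms(1,2)] by simp
  have Sc: "S \<subseteq> carrier G" using subgroup.subset[OF assms(1)] .
  have Fc: "?h ` F \<subseteq> carrier (G Mod S)" using assms(3) by auto
  have "?h ` generate G (S \<union> F) = generate (G Mod S) (?h ` (S \<union> F))"
    using h.generate_img[of "S \<union> F"] Sc assms(3) by simp
  also have "\<dots> \<subseteq> generate (G Mod S) (?h ` F)"
  proof (rule h.H.generate_subgroup_incl[OF _ h.H.generate_is_subgroup[OF Fc]])
    have "?h ` S \<subseteq> {\<one>\<^bsub>G Mod S\<^esub>}" using one_Mod_iff[OF assms(1)] Sc by auto
    moreover have "\<one>\<^bsub>G Mod S\<^esub> \<in> generate (G Mod S) (?h ` F)" by (rule generate.one)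
    moreover have "?h ` F \<subseteq> generate (G Mod S) (?h ` F)"
    proof
      fix y assume "y \<in> ?h ` F" then show "y \<in> generate (G Mod S) (?h ` F)" by (rule generate.incl)
    qed
    ultimately show "?h ` (S \<union> F) \<subseteq> generate (G Mod S) (?h ` F)" by auto
  qed
  finally show ?thesis .
qed

context maxN begin

lemma FG:
  assumes F: "finite F" "F \<subseteq> carrier G"
  shows "generate G (N \<union> F) \<noteq> carrier G"
proof
  assume eq: "generate G (N \<union> F) = carrier G"
  have ex: "\<forall>f\<in>F. \<exists>mn::nat \<times> nat. fst mn > 0 \<and> f [^] (fst mn) \<in> L (snd mn)"
  proof
    fix f assume f: "f \<in> F"
    then have fc: "f \<in> carrier G" using F by auto
    show "\<exists>mn::nat \<times> nat. fst mn > 0 \<and> f [^] (fst mn) \<in> L (snd mn)"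
    proof (cases "f \<in> N")
      case True
      then have "f [^] (1::nat) \<in> L 0" using fc L0 by simp
      then show ?thesis by (intro exI[of _ "(1, 0)"]) simp
    next
      case False
      then obtain m :: nat and n where "m > 0" "f [^] m \<in> L n" using key_nat[OF fc False] by blast
      then show ?thesis by (intro exI[of _ "(m, n)"]) simp
    qed
  qed
  have "\<exists>c::'a \<Rightarrow> nat \<times> nat. \<forall>f\<in>F. fst (c f) > 0 \<and> f [^] (fst (c f)) \<in> L (snd (c f))"
    using bchoice[OF ex] by blast
  then obtain c :: "'a \<Rightarrow> nat \<times> nat" where c: "\<forall>f\<in>F. fst (c f) > 0 \<and> f [^] (fst (c f)) \<in> L (snd (c f))"
    by (rule exE)
  define M where "M = (\<Prod>f\<in>F. fst (c f))"
  define n0 where "n0 = (\<Sum>f\<in>F. snd (c f))"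
  have M0: "M > 0" unfolding M_def using c by (intro prod_pos) auto
  let ?S = "L n0"
  have fM: "f [^] M \<in> ?S" if f: "f \<in> F" for f
  proof -
    have fc: "f \<in> carrier G" using f F by auto
    have "fst (c f) dvd M" unfolding M_def using F(1) f by (rule dvd_prod_eqI) simp
    then obtain t where t: "M = fst (c f) * t" by (elim dvdE)
    have "f [^] M = (f [^] (fst (c f))) [^] t" using fc t by (simp add: nat_pow_pow)
    also have "\<dots> = (f [^] (fst (c f))) [^] (int t)" by (simp add: int_pow_int)
    finally have "f [^] M \<in> L (snd (c f))"
      using subgroup_int_pow_closed[OF L_sg, of "f [^] (fst (c f))" "snd (c f)" "int t"] c f by simp
    moreover have "snd (c f) \<le> n0" unfolding n0_def using f F(1) by (intro member_le_sum) auto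
    ultimately show ?thesis using L_mono by blast
  qed
  let ?h = "\<lambda>x. ?S #> x"
  interpret hS: group_hom G "G Mod ?S" ?h using hom_Mod_of_D[OF L_sg L_D] by simp
  interpret QS: comm_group "G Mod ?S" using comm_Mod_of_D[OF L_sg L_D] by simp
  have hFc: "?h ` F \<subseteq> carrier (G Mod ?S)" using F by auto
  have "\<forall>y\<in>?h ` F. y [^]\<^bsub>G Mod ?S\<^esub> M = \<one>\<^bsub>G Mod ?S\<^esub>"
  proof
    fix y assume "y \<in> ?h ` F"
    then obtain f where f: "f \<in> F" "y = ?h f" by blast
    have fc: "f \<in> carrier G" using f F by auto
    have "y [^]\<^bsub>G Mod ?S\<^esub> M = ?h (f [^] M)" using f fc by (simp add: hS.hom_nat_pow)
    also have "\<dots> = \<one>\<^bsub>G Mod ?S\<^esub>" using one_Mod_iff[OF L_sg] fM[OF f(1)] fc by simp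
    finally show "y [^]\<^bsub>G Mod ?S\<^esub> M = \<one>\<^bsub>G Mod ?S\<^esub>" .
  qed
  then have fin: "finite (generate (G Mod ?S) (?h ` F))"
    using QS.fin_gen_exp[OF finite_imageI[OF F(1)] hFc M0] by simp
  have "carrier G \<subseteq> generate G (?S \<union> F)"
    unfolding eq[symmetric] using N_L by (intro mono_generate) blast
  then have "?h ` carrier G \<subseteq> generate (G Mod ?S) (?h ` F)"
    using img_gen[OF L_sg L_D F(2)] by blast
  then have finc: "finite (?h ` carrier G)" using fin by (rule finite_subset)
  define g where "g k = ?h (b (n0 + k))" for k
  have "range g \<subseteq> ?h ` carrier G" unfolding g_def using b_in by blast
  then have "finite (range g)" using finc by (rule finite_subset)
  then have "\<not> inj g"
  proof -
    assume fr: "finite (range g)"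
    show "\<not> inj g"
    proof
      assume "inj g" then have "infinite (range g)" by (rule range_inj_infinite)
      then show False using fr by simp
    qed
  qed
  then obtain i j where ij: "i \<noteq> j" "g i = g j" unfolding inj_def by auto
  have "\<exists>i j. i < j \<and> g i = g j"
  proof (cases "i < j")
    case True then show ?thesis using ij by blast
  next
    case False then have "j < i" using ij(1) by simp
    then show ?thesis using ij(2) by (intro exI[of _ j] exI[of _ i]) simp
  qed
  then obtain i j where ij: "i < j" "g i = g j" by blast
  have bi: "b (n0 + i) \<in> carrier G" and bj: "b (n0 + j) \<in> carrier G" using b_in by auto
  have "b (n0 + j) \<otimes> inv b (n0 + i) \<in> ?S"
    using ij(2)[unfolded g_def, symmetric] rcos_eq_iff[OF L_sg[of n0] bj bi] by simp
  then have in1: "b (n0 + j) \<otimes> inv b (n0 + i) \<in> L (n0 + j)" using L_mono[of n0 "n0 + j"] by auto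
  have "b (n0 + i) \<in> L (Suc (n0 + i))" by (rule b_L)
  then have in2: "b (n0 + i) \<in> L (n0 + j)" using L_mono[of "Suc (n0 + i)" "n0 + j"] ij(1) by auto
  have "(b (n0 + j) \<otimes> inv b (n0 + i)) \<otimes> b (n0 + i) \<in> L (n0 + j)"
    using subgroup.m_closed[OF L_sg in1 in2] .
  then have "b (n0 + j) \<in> L (n0 + j)" using bi bj by (simp add: m_assoc)
  then show False using P unfolding L_def by blast
qed

lemma chain_exists:
  "\<exists>W. (\<forall>n. subgroup (W n) G) \<and> (\<forall>n. W n \<subseteq> W (Suc n)) \<and> (\<forall>x\<in>carrier G. \<exists>n. x \<in> W n)
      \<and> (\<forall>n. W n \<noteq> carrier G)"
proof -
  have ne: "carrier (G Mod N) \<noteq> {}" using q_surj by auto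
  define e' where "e' = from_nat_into (carrier (G Mod N))"
  have re: "range e' = carrier (G Mod N)" unfolding e'_def using ne all_cnt by (rule range_from_nat_into)
  define e where "e n = (SOME x. x \<in> carrier G \<and> q x = e' n)" for n
  have e: "e n \<in> carrier G \<and> q (e n) = e' n" for n
  proof -
    have "e' n \<in> q ` carrier G" using re q_surj by blast
    then have "\<exists>x. x \<in> carrier G \<and> q x = e' n" by blast
    then show ?thesis unfolding e_def by (rule someI_ex)
  qed
  define W where "W n = generate G (N \<union> e ` {..n})" for n
  have sub: "N \<union> e ` {..n} \<subseteq> carrier G" for n using Nc e by auto
  have s1: "\<forall>n. subgroup (W n) G" unfolding W_def by (intro allI generate_is_subgroup sub)
  have s2: "\<forall>n. W n \<subseteq> W (Suc n)" unfolding W_def by (intro allI mono_generate) auto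
  have s3: "\<forall>x\<in>carrier G. \<exists>n. x \<in> W n"
  proof
    fix x assume x: "x \<in> carrier G"
    then have "q x \<in> range e'" using re q_surj by blast
    then obtain j where "q x = e' j" by blast
    then have qe: "q x = q (e j)" using e by simp
    have ec: "e j \<in> carrier G" using e by simp
    have "x \<otimes> inv (e j) \<in> N" using rcos_eq_iff[OF N_sg x ec] qe by simp
    then have a: "x \<otimes> inv (e j) \<in> W j" unfolding W_def by (intro generate.incl) simp
    have b: "e j \<in> W j" unfolding W_def by (intro generate.incl) simp
    have "(x \<otimes> inv (e j)) \<otimes> e j \<in> W j" by (rule generate.eng[OF a[unfolded W_def] b[unfolded W_def], folded W_def])
    then have "x \<in> W j" using x e by (simp add: m_assoc)
    then show "\<exists>n. x \<in> W n" by blast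
  qed
  have s4: "\<forall>n. W n \<noteq> carrier G"
    unfolding W_def using e by (intro allI FG) auto
  show ?thesis by (rule exI[of _ W]) (intro conjI s1 s2 s3 s4)
qed

end

lemma (in group) chain_union_subgroup:
  assumes ne: "C \<noteq> {}" and ch: "chain\<^sub>\<subseteq> C" and sg: "\<forall>N\<in>C. subgroup N G"
  shows "subgroup (\<Union>C) G"
proof (rule subgroupI)
  show "\<Union>C \<subseteq> carrier G"
  proof (rule Union_least)
    fix N assume "N \<in> C" then show "N \<subseteq> carrier G" using sg by (simp add: subgroup.subset)
  qed
  obtain N where N: "N \<in> C" using ne by blast
  then have "\<one> \<in> N" using sg by (simp add: subgroup.one_closed)
  then show "\<Union>C \<noteq> {}" using N by blast
next
  fix a assume "a \<in> \<Union>C"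
  then obtain N where N: "N \<in> C" "a \<in> N" by (rule UnionE)
  then have "inv a \<in> N" using sg by (simp add: subgroup.m_inv_closed)
  then show "inv a \<in> \<Union>C" using N(1) by (rule UnionI[rotated])
next
  fix a c assume a: "a \<in> \<Union>C" and c: "c \<in> \<Union>C"
  obtain N1 where N1: "N1 \<in> C" "a \<in> N1" using a by (rule UnionE)
  obtain N2 where N2: "N2 \<in> C" "c \<in> N2" using c by (rule UnionE)
  have s1: "subgroup N1 G" "subgroup N2 G" using sg N1 N2 by auto
  have "N1 \<subseteq> N2 \<or> N2 \<subseteq> N1" using ch N1(1) N2(1) unfolding chain_subset_def by blast
  then show "a \<otimes> c \<in> \<Union>C"
  proof
    assume "N1 \<subseteq> N2"
    then have "a \<otimes> c \<in> N2" using N1(2) N2(2) s1(2) by (simp add: subgroup.m_closed subsetD)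
    then show ?thesis using N2(1) by (rule UnionI[rotated])
  next
    assume "N2 \<subseteq> N1"
    then have "a \<otimes> c \<in> N1" using N1(2) N2(2) s1(1) by (simp add: subgroup.m_closed subsetD)
    then show ?thesis using N1(1) by (rule UnionI[rotated])
  qed
qed

lemma finite_in_chain:
  assumes "finite Z" "Z \<subseteq> \<Union>C" "C \<noteq> {}" "chain\<^sub>\<subseteq> C"
  shows "\<exists>N\<in>C. Z \<subseteq> N"
  using assms(1,2)
proof (induction Z rule: finite_induct)
  case empty then show ?case using assms(3) by blast
next
  case (insert x Z)
  then obtain N1 where N1: "N1 \<in> C" "Z \<subseteq> N1" by blast
  obtain N2 where N2: "N2 \<in> C" "x \<in> N2" using insert.prems by blast
  have "N1 \<subseteq> N2 \<or> N2 \<subseteq> N1" using assms(4) N1 N2 unfolding chain_subset_def by blast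
  then show ?case using N1 N2 by blast
qed

theorem corollary2p8:
  fixes G :: "('a, 'b) monoid_scheme"
  assumes "group G" and "SB_generated G"
  shows "finitely_generated_group (abelianization G)"
proof (rule ccontr)
  assume nfg: "\<not> finitely_generated_group (abelianization G)"
  interpret group G by fact
  let ?D = "derived G (carrier G)"
  have Dsg: "subgroup ?D G" by (rule derived_is_subgroup) simp
  obtain A where A: "strongly_bounded G A" "generate G A = carrier G"
    using assms(2) unfolding SB_generated_def by blast
  have nogen: "\<exists>x. x \<in> carrier G \<and> x \<notin> generate G (?D \<union> F)" if F: "finite F" "F \<subseteq> carrier G" for F
  proof -
    have "generate G (?D \<union> F) \<noteq> carrier G" using fg_ab[OF F] nfg by blast
    moreover have "generate G (?D \<union> F) \<subseteq> carrier G"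
      using subgroup.subset[OF Dsg] F by (intro generate_incl) auto
    ultimately show ?thesis by blast
  qed
  define c where "c F = (SOME x. x \<in> carrier G \<and> x \<notin> generate G (?D \<union> F))" for F
  have c: "c F \<in> carrier G \<and> c F \<notin> generate G (?D \<union> F)" if "finite F" "F \<subseteq> carrier G" for F
    unfolding c_def using nogen[OF that] by (rule someI_ex)
  define Fs where "Fs = Fseq c"
  define b where "b n = c (Fs n)" for n
  have Fs: "finite (Fs n) \<and> Fs n \<subseteq> carrier G" for n
  proof (induction n)
    case 0 then show ?case unfolding Fs_def by simp
  next
    case (Suc n)
    have "c (Fs n) \<in> carrier G" using c Suc by blast
    then show ?case using Suc unfolding Fs_def by simp
  qed
  have bc: "b n \<in> carrier G \<and> b n \<notin> generate G (?D \<union> Fs n)" for n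
    unfolding b_def using c Fs by blast
  define AA where "AA = {N. subgroup N G \<and> ?D \<subseteq> N \<and> (\<forall>n. b n \<notin> generate G (N \<union> Fs n))}"
  have DA: "?D \<in> AA" unfolding AA_def using Dsg bc by blast
  have "\<forall>C\<in>chains AA. \<exists>U\<in>AA. \<forall>Z\<in>C. Z \<subseteq> U"
  proof
    fix C assume C: "C \<in> chains AA"
    show "\<exists>U\<in>AA. \<forall>Z\<in>C. Z \<subseteq> U"
    proof (cases "C = {}")
      case True then show ?thesis using DA by blast
    next
      case False
      have Csub: "C \<subseteq> AA" and Cch: "chain\<^sub>\<subseteq> C" using C unfolding chains_def by auto
      have sgC: "\<forall>N\<in>C. subgroup N G" using Csub unfolding AA_def by blast
      have sg: "subgroup (\<Union>C) G" by (rule chain_union_subgroup[OF False Cch sgC])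
      have Dsub: "?D \<subseteq> \<Union>C" using False Csub unfolding AA_def by blast
      have Pc: "\<forall>n. b n \<notin> generate G (\<Union>C \<union> Fs n)"
      proof (intro allI notI)
        fix n assume "b n \<in> generate G (\<Union>C \<union> Fs n)"
        then have "\<exists>X0. finite X0 \<and> X0 \<subseteq> \<Union>C \<union> Fs n \<and> b n \<in> generate G X0"
          by (rule gen_fin)
        then obtain X0 where X0': "finite X0 \<and> X0 \<subseteq> \<Union>C \<union> Fs n \<and> b n \<in> generate G X0"
          by (rule exE)
        then have X0: "finite X0" "X0 \<subseteq> \<Union>C \<union> Fs n" "b n \<in> generate G X0" by auto
        have f1: "finite (X0 \<inter> \<Union>C)" using X0(1) by simp
        have f2: "X0 \<inter> \<Union>C \<subseteq> \<Union>C" by (rule Int_lower2)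
        obtain N where N: "N \<in> C" "X0 \<inter> \<Union>C \<subseteq> N"
          using finite_in_chain[OF f1 f2 False Cch] by (rule bexE)
        have "X0 \<subseteq> N \<union> Fs n" using X0(2) N(2) by blast
        then have bN: "b n \<in> generate G (N \<union> Fs n)" by (rule subsetD[OF mono_generate X0(3)])
        have "N \<in> AA" using N(1) Csub by (rule subsetD[rotated])
        then have "b n \<notin> generate G (N \<union> Fs n)" unfolding AA_def by simp
        then show False using bN by simp
      qed
      have "\<Union>C \<in> AA" unfolding AA_def using sg Dsub Pc by blast
      then show ?thesis by blast
    qed
  qed
  then obtain N where N: "N \<in> AA" and Nmax: "\<forall>Z\<in>AA. N \<subseteq> Z \<longrightarrow> Z = N"
    using Zorn_Lemma2[of AA] by blast
  have NA: "subgroup N G" "?D \<subseteq> N" "\<forall>n. b n \<notin> generate G (N \<union> Fs n)" using N unfolding AA_def by auto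
  have "maxN G b Fs N"
    unfolding maxN_def maxN_axioms_def
  proof (intro conjI allI impI)
    show "group G" by fact
    show "\<And>n. finite (Fs n)" using Fs by blast
    show "\<And>n. Fs n \<subseteq> carrier G" using Fs by blast
    show "Fs 0 = {}" unfolding Fs_def by simp
    show "\<And>n. Fs (Suc n) = insert (b n) (Fs n)" unfolding Fs_def b_def by simp
    show "\<And>n. b n \<in> carrier G" using bc by blast
    show "subgroup N G" "?D \<subseteq> N" by (rule NA(1), rule NA(2))
    show "\<And>n. b n \<notin> generate G (N \<union> Fs n)" using NA(3) by blast
    show "\<And>N'. subgroup N' G \<Longrightarrow> N \<subseteq> N' \<Longrightarrow> \<forall>n. b n \<notin> generate G (N' \<union> Fs n) \<Longrightarrow> N' = N"
    proof -
      fix N' assume N': "subgroup N' G" "N \<subseteq> N'" "\<forall>n. b n \<notin> generate G (N' \<union> Fs n)"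
      have "N' \<in> AA" unfolding AA_def using N' NA(2) by blast
      then show "N' = N" using Nmax N'(2) by blast
    qed
  qed
  then interpret M: maxN G b Fs N .
  obtain W where W: "\<forall>n. subgroup (W n) G" "\<forall>n. W n \<subseteq> W (Suc n)" "\<forall>x\<in>carrier G. \<exists>n. x \<in> W n"
    "\<forall>n. W n \<noteq> carrier G"
    using M.chain_exists by blast
  obtain n where n: "A \<subseteq> W n"
    using chain_bound[of W A] W(1-3) A(1) by blast
  have "generate G A \<subseteq> W n" by (rule generate_subgroup_incl[OF n spec[OF W(1)]])
  then have "carrier G \<subseteq> W n" using A(2) by simp
  moreover have "W n \<subseteq> carrier G" by (rule subgroup.subset[OF spec[OF W(1)]])
  ultimately have "W n = carrier G" by (rule equalityI[rotated])
  then show False using spec[OF W(4), of n] by simp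
qed

end
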